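(* Let $\mathcal{H}=(V,E)$ be a linear hypergraph such that $\mathrm{ar}(\mathcal{H})\ge |V|^{1/2}$. Then $$\mathrm{q}(\mathcal{H})\le \Delta([\mathcal{H}]_2)+1.$$
   Context: A hypergraph $\mathcal{H}=(V,E)$ has a finite vertex set $V$ and a finite set $E$ of nonempty subsets of $V$ (hyperedges). It is linear if $|e\cap e'|\le 1$ for all distinct $e,e'\in E$. The antirank $\mathrm{ar}(\mathcal{H})$ is the minimum cardinality of a hyperedge (set to $\infty$ if $E=\varnothing$). The 2-section $[\mathcal{H}]_2$ is the simple graph on $V$ in which two distinct vertices are adjacent iff some hyperedge contains both; $\Delta([\mathcal{H}]_2)$ is its maximum degree. The chromatic index $\mathrm{q}(\mathcal{H})$ is the least $k$ such that the hyperedges can be colored with $k$ colors so that any two distinct intersecting hyperedges receive different colors. *)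

theory Defs
  imports "HOL-Analysis.Analysis"
begin

definition hypergraph :: "'a set \<Rightarrow> 'a set set \<Rightarrow> bool" where
  "hypergraph V E \<longleftrightarrow> finite V \<and> (\<forall>e\<in>E. e \<noteq> {} \<and> e \<subseteq> V)"

definition linear_hg :: "'a set set \<Rightarrow> bool" where
  "linear_hg E \<longleftrightarrow> (\<forall>e\<in>E. \<forall>e'\<in>E. e \<noteq> e' \<longrightarrow> card (e \<inter> e') \<le> 1)"

definition antirank :: "'a set set \<Rightarrow> ereal" where
  "antirank E = (if E = {} then \<infinity> else ereal (real (Min (card ` E))))"

definition sec2_adj :: "'a set set \<Rightarrow> 'a \<Rightarrow> 'a \<Rightarrow> bool" where
  "sec2_adj E u v \<longleftrightarrow> u \<noteq> v \<and> (\<exists>e\<in>E. u \<in> e \<and> v \<in> e)"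

definition sec2_degree :: "'a set \<Rightarrow> 'a set set \<Rightarrow> 'a \<Rightarrow> nat" where
  "sec2_degree V E v = card {u\<in>V. sec2_adj E v u}"

definition sec2_max_degree :: "'a set \<Rightarrow> 'a set set \<Rightarrow> nat" where
  "sec2_max_degree V E = Max (insert 0 (sec2_degree V E ` V))"

definition proper_edge_coloring :: "'a set set \<Rightarrow> nat \<Rightarrow> ('a set \<Rightarrow> nat) \<Rightarrow> bool" where
  "proper_edge_coloring E k c \<longleftrightarrow>
     (\<forall>e\<in>E. c e < k) \<and>
     (\<forall>e\<in>E. \<forall>e'\<in>E. e \<noteq> e' \<and> e \<inter> e' \<noteq> {} \<longrightarrow> c e \<noteq> c e')"

definition chromatic_index :: "'a set set \<Rightarrow> nat" where
  "chromatic_index E = (LEAST k. \<exists>c. proper_edge_coloring E k c)"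

end

theory Submission
  imports Defs
begin

definition good :: "'a set \<Rightarrow> 'a set set \<Rightarrow> bool" where
  "good V E \<longleftrightarrow> finite V \<and> (\<forall>e\<in>E. e \<noteq> {} \<and> e \<subseteq> V) \<and> linear_hg E \<and> (\<forall>e\<in>E. card V \<le> card e ^ 2)"

definition nbs :: "'a set set \<Rightarrow> 'a set \<Rightarrow> 'a set set" where
  "nbs E e = {f\<in>E. f \<noteq> e \<and> f \<inter> e \<noteq> {}}"

lemma good_sub: "good V E \<Longrightarrow> E' \<subseteq> E \<Longrightarrow> good V E'"
  unfolding good_def linear_hg_def by (meson subsetD)

lemma good_finE: "good V E \<Longrightarrow> finite E"
  unfolding good_def by (meson Pow_iff finite_Pow_iff rev_finite_subset subsetI)

lemma good_fin_edge: "good V E \<Longrightarrow> e \<in> E \<Longrightarrow> finite e"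
  unfolding good_def by (meson finite_subset)

lemma good_lin: "good V E \<Longrightarrow> e \<in> E \<Longrightarrow> f \<in> E \<Longrightarrow> e \<noteq> f \<Longrightarrow> x \<in> e \<Longrightarrow> x \<in> f \<Longrightarrow> e \<inter> f = {x}"
proof -
  assume a: "good V E" "e \<in> E" "f \<in> E" "e \<noteq> f" "x \<in> e" "x \<in> f"
  have "card (e \<inter> f) \<le> 1" using a unfolding good_def linear_hg_def by blast
  moreover have "finite (e \<inter> f)" using good_fin_edge[OF a(1,2)] by simp
  moreover have "x \<in> e \<inter> f" using a by simp
  ultimately have "\<forall>a\<in>e \<inter> f. \<forall>b\<in>e \<inter> f. a = b" using card_le_Suc0_iff_eq by (metis One_nat_def)
  thus ?thesis using \<open>x \<in> e \<inter> f\<close> by blast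
qed

lemma deg_le_max: "finite V \<Longrightarrow> v \<in> V \<Longrightarrow> sec2_degree V E v \<le> sec2_max_degree V E"
  unfolding sec2_max_degree_def by simp

lemma deg_le_n: "finite V \<Longrightarrow> v \<in> V \<Longrightarrow> sec2_degree V E v \<le> card V - 1"
proof -
  assume a: "finite V" "v \<in> V"
  have "{u\<in>V. sec2_adj E v u} \<subseteq> V - {v}" unfolding sec2_adj_def by auto
  hence "card {u\<in>V. sec2_adj E v u} \<le> card (V - {v})" using a by (intro card_mono) auto
  thus ?thesis using a unfolding sec2_degree_def by simp
qed

lemma max_mono: "finite V \<Longrightarrow> E' \<subseteq> E \<Longrightarrow> sec2_max_degree V E' \<le> sec2_max_degree V E"
proof -
  assume a: "finite V" "E' \<subseteq> E"
  have "sec2_degree V E' v \<le> sec2_degree V E v" if "v \<in> V" for v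
    unfolding sec2_degree_def
    by (rule card_mono) (use a in \<open>auto simp: sec2_adj_def\<close>)
  hence "sec2_degree V E' v \<le> sec2_max_degree V E" if "v \<in> V" for v
    using that deg_le_max[OF a(1) that, of E] le_trans by blast
  thus ?thesis unfolding sec2_max_degree_def[of V E'] using a(1)
    by (subst Max_le_iff) auto
qed

lemma deg_eq:
  assumes g: "good V E" and v: "v \<in> V"
  shows "sec2_degree V E v = (\<Sum>g\<in>{g\<in>E. v \<in> g}. card g - 1)"
proof -
  have fin: "finite {g\<in>E. v \<in> g}" using good_finE[OF g] by simp
  have eq: "{u\<in>V. sec2_adj E v u} = (\<Union>g\<in>{g\<in>E. v \<in> g}. g - {v})"
    using g unfolding sec2_adj_def good_def by blast
  have "card (\<Union>g\<in>{g\<in>E. v \<in> g}. g - {v}) = (\<Sum>g\<in>{g\<in>E. v \<in> g}. card (g - {v}))"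
  proof (rule card_UN_disjoint[OF fin])
    show "\<forall>i\<in>{g \<in> E. v \<in> g}. finite (i - {v})" using good_fin_edge[OF g] by blast
    show "\<forall>i\<in>{g \<in> E. v \<in> g}. \<forall>j\<in>{g \<in> E. v \<in> g}. i \<noteq> j \<longrightarrow> (i - {v}) \<inter> (j - {v}) = {}"
      using good_lin[OF g] by blast
  qed
  also have "\<dots> = (\<Sum>g\<in>{g\<in>E. v \<in> g}. card g - 1)"
    using good_fin_edge[OF g] by (intro sum.cong) auto
  finally show ?thesis unfolding sec2_degree_def eq .
qed

lemma nbs_le:
  assumes g: "good V E" and e: "e \<in> E"
  shows "card (nbs E e) \<le> (\<Sum>v\<in>e. card {f\<in>E. v \<in> f \<and> f \<noteq> e})"
proof -
  have "nbs E e = (\<Union>v\<in>e. {f\<in>E. v \<in> f \<and> f \<noteq> e})" unfolding nbs_def by blast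
  moreover have "card (\<Union>v\<in>e. {f\<in>E. v \<in> f \<and> f \<noteq> e}) \<le> (\<Sum>v\<in>e. card {f\<in>E. v \<in> f \<and> f \<noteq> e})"
    using good_fin_edge[OF g e] by (rule card_UN_le)
  ultimately show ?thesis by simp
qed


lemma tight:
  assumes g: "good V E" and e: "e \<in> E" and mn: "\<forall>f\<in>E. card e \<le> card f"
    and big: "sec2_max_degree V E < card (nbs E e)" and v: "v \<in> e"
  shows "sec2_degree V E v = card V - 1 \<and> (\<forall>f\<in>E. v \<in> f \<longrightarrow> card f = card e)
         \<and> card V = card e ^ 2 \<and> 2 \<le> card e"
proof -
  define F where "F u = {f\<in>E. u \<in> f \<and> f \<noteq> e}" for u
  define n where "n = card V"
  define r where "r = card e"
  define \<Delta> where "\<Delta> = sec2_max_degree V E"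
  have finV: "finite V" using g unfolding good_def by simp
  have finE: "finite E" using good_finE[OF g] .
  have fine: "finite e" using good_fin_edge[OF g e] .
  have eV: "e \<subseteq> V" "e \<noteq> {}" using g e unfolding good_def by auto
  have r1: "r \<ge> 1" using fine eV unfolding r_def by (simp add: Suc_leI card_gt_0_iff)
  have nr: "n \<le> r^2" using g e unfolding good_def n_def r_def by blast
  have finF: "finite (F u)" for u using finE unfolding F_def by simp
  have degF: "sec2_degree V E u = (r - 1) + (\<Sum>f\<in>F u. card f - 1)" if "u \<in> e" for u
  proof -
    have "{g\<in>E. u \<in> g} = insert e (F u)" using e that unfolding F_def by auto
    moreover have "e \<notin> F u" unfolding F_def by simp
    ultimately show ?thesis using deg_eq[OF g, of u] that eV finF unfolding r_def by auto
  qed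
  have lowF: "card (F u) * (r - 1) \<le> (\<Sum>f\<in>F u. card f - 1)" for u
  proof -
    have "(\<Sum>f\<in>F u. r - 1) \<le> (\<Sum>f\<in>F u. card f - 1)"
      by (rule sum_mono) (use mn in \<open>auto simp: F_def r_def\<close>)
    thus ?thesis by simp
  qed
  have degD: "sec2_degree V E u \<le> \<Delta>" "sec2_degree V E u \<le> n - 1" if "u \<in> e" for u
    using deg_le_max[OF finV] deg_le_n[OF finV] that eV unfolding \<Delta>_def n_def by auto
  have r2: "r \<ge> 2"
  proof (rule ccontr)
    assume "\<not> 2 \<le> r"
    hence r1': "r = 1" using r1 by simp
    hence "n \<le> 1" using nr by simp
    hence "card V \<le> card e" using r1' unfolding n_def r_def by simp
    hence eqV: "e = V" using eV finV by (simp add: card_seteq)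
    have "nbs E e = {}"
    proof (rule ccontr)
      assume "nbs E e \<noteq> {}"
      then obtain f where f: "f \<in> E" "f \<noteq> e" unfolding nbs_def by auto
      hence "f \<subseteq> e" using g eqV unfolding good_def by auto
      moreover have "card e \<le> card f" using mn f by simp
      ultimately show False using f fine by (metis card_seteq)
    qed
    thus False using big by simp
  qed
  define m where "m = r - 1"
  have m: "r = m + 1" "m \<ge> 1" using r2 unfolding m_def by auto
  have Dex: "\<exists>u0\<in>e. \<forall>u\<in>e. card (F u) \<le> card (F u0)"
  proof -
    have "Max ((\<lambda>u. card (F u)) ` e) \<in> (\<lambda>u. card (F u)) ` e" using fine eV by (intro Max_in) auto
    then obtain u0 where "u0 \<in> e" "card (F u0) = Max ((\<lambda>u. card (F u)) ` e)" by auto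
    moreover have "\<forall>u\<in>e. card (F u) \<le> Max ((\<lambda>u. card (F u)) ` e)" using fine by simp
    ultimately show ?thesis by metis
  qed
  then obtain u0 where u0: "u0 \<in> e" "\<forall>u\<in>e. card (F u) \<le> card (F u0)" by blast
  define D where "D = card (F u0)"
  have N_le: "card (nbs E e) \<le> (\<Sum>u\<in>e. card (F u))" using nbs_le[OF g e] unfolding F_def by simp
  have sum_le: "(\<Sum>u\<in>e. card (F u)) \<le> r * D"
    using sum_bounded_above[of e "\<lambda>u. card (F u)" D] u0 unfolding D_def r_def by auto
  have low0: "m * (1 + D) \<le> sec2_degree V E u0"
    using degF[OF u0(1)] lowF[of u0] m unfolding D_def by (simp add: algebra_simps)
  have "D \<ge> m + 1"
  proof (rule ccontr)
    assume "\<not> m + 1 \<le> D"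
    hence "(m + 1) * D \<le> m * (1 + D)" by (simp add: algebra_simps)
    moreover have "r * D = (m + 1) * D" using m by simp
    ultimately show False using low0 degD[OF u0(1)] sum_le N_le big m unfolding \<Delta>_def by linarith
  qed
  moreover have "D \<le> m + 1"
  proof -
    have "m * (1 + D) \<le> n - 1" using low0 degD(2)[OF u0(1)] by linarith
    also have "\<dots> \<le> m * (m + 2)" using nr m by (simp add: power2_eq_square algebra_simps)
    finally have "m * (1 + D) \<le> m * (m + 2)" .
    hence "1 + D \<le> m + 2" using m(2) unfolding mult_le_cancel1 by simp
    thus ?thesis by simp
  qed
  ultimately have Dm: "D = m + 1" by simp
  have Dlow: "m * (m + 2) \<le> \<Delta>" using low0 degD(1)[OF u0(1)] Dm by (simp add: algebra_simps)
  have allF: "card (F u) = m + 1" if u: "u \<in> e" for u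
  proof (rule ccontr)
    assume "card (F u) \<noteq> m + 1"
    moreover have "card (F u) \<le> D" using u0(2) u unfolding D_def by blast
    ultimately have "card (F u) \<le> m" using Dm by simp
    have "(\<Sum>u\<in>e. card (F u)) = card (F u) + (\<Sum>u\<in>e - {u}. card (F u))"
      using fine u by (simp add: sum.remove)
    also have "(\<Sum>u\<in>e - {u}. card (F u)) \<le> card (e - {u}) * (m + 1)"
      using sum_bounded_above[of "e - {u}" "\<lambda>u. card (F u)" "m+1"] u0(2) Dm unfolding D_def by auto
    also have "card (e - {u}) = m" using u fine m unfolding r_def by simp
    finally have "(\<Sum>u\<in>e. card (F u)) \<le> m + m * (m + 1)" using \<open>card (F u) \<le> m\<close> by linarith
    thus False using N_le big Dlow unfolding \<Delta>_def by (simp add: algebra_simps)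
  qed
  have Fv: "card (F v) = m + 1" using allF v .
  have S: "(m + 1) * m \<le> (\<Sum>f\<in>F v. card f - 1)" using lowF[of v] Fv m by simp
  have dv: "sec2_degree V E v = m + (\<Sum>f\<in>F v. card f - 1)" using degF[OF v] m by simp
  have nle: "n - 1 \<le> m * (m + 2)" using nr m by (simp add: power2_eq_square algebra_simps)
  have S2: "(\<Sum>f\<in>F v. card f - 1) = (m + 1) * m" and dn: "sec2_degree V E v = n - 1"
    using S dv degD(2)[OF v] nle by (simp_all add: algebra_simps)
  have nsq: "n = r ^ 2" using dn dv S2 nr m degD(2)[OF v] by (simp add: power2_eq_square algebra_simps)
  have cf: "card f = r" if f: "f \<in> E" "v \<in> f" for f
  proof (cases "f = e")
    case True thus ?thesis unfolding r_def by simp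
  next
    case False
    hence fF: "f \<in> F v" using f unfolding F_def by simp
    have "(\<Sum>f\<in>F v. card f - 1) = (card f - 1) + (\<Sum>f\<in>F v - {f}. card f - 1)"
      using finF fF by (simp add: sum.remove)
    moreover have "card (F v - {f}) * (r - 1) \<le> (\<Sum>f\<in>F v - {f}. card f - 1)"
    proof -
      have "(\<Sum>f\<in>F v - {f}. r - 1) \<le> (\<Sum>f\<in>F v - {f}. card f - 1)"
        by (rule sum_mono) (use mn in \<open>auto simp: F_def r_def\<close>)
      thus ?thesis by simp
    qed
    moreover have "card (F v - {f}) = m" using fF finF Fv by simp
    ultimately have "card f - 1 \<le> m" using S2 m by (simp add: algebra_simps)
    moreover have "card e \<le> card f" using mn f by simp
    ultimately show ?thesis using m unfolding r_def by simp
  qed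
  show ?thesis using dn nsq cf r2 unfolding n_def r_def by blast
qed


lemma cover:
  assumes g: "good V E" and w: "w \<in> V" and d: "sec2_degree V E w = card V - 1"
    and u: "u \<in> V" "u \<noteq> w"
  shows "\<exists>f\<in>E. w \<in> f \<and> u \<in> f"
proof -
  have finV: "finite V" using g unfolding good_def by simp
  have sub: "{x\<in>V. sec2_adj E w x} \<subseteq> V - {w}" unfolding sec2_adj_def by auto
  have "card {x\<in>V. sec2_adj E w x} = card (V - {w})" using d w finV unfolding sec2_degree_def by simp
  hence "{x\<in>V. sec2_adj E w x} = V - {w}" using sub finV by (intro card_subset_eq) auto
  hence "sec2_adj E w u" using u by blast
  thus ?thesis unfolding sec2_adj_def by blast
qed

lemma caseB:
  assumes g: "good V E" and ne: "E \<noteq> {}" and B: "\<forall>e\<in>E. sec2_max_degree V E < card (nbs E e)"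
  shows "\<exists>r. (\<forall>w\<in>V. sec2_degree V E w = card V - 1) \<and> (\<forall>f\<in>E. card f = r) \<and> card V = r^2 \<and> 2 \<le> r"
proof -
  have finE: "finite E" using good_finE[OF g] .
  obtain e0 where e0: "e0 \<in> E" "\<forall>f\<in>E. card e0 \<le> card f"
  proof -
    have "Min (card ` E) \<in> card ` E" using finE ne by (intro Min_in) auto
    then obtain e0 where "e0 \<in> E" "card e0 = Min (card ` E)" by auto
    moreover have "\<forall>f\<in>E. Min (card ` E) \<le> card f" using finE by simp
    ultimately show ?thesis using that by metis
  qed
  define r where "r = card e0"
  obtain v0 where v0: "v0 \<in> e0" using g e0 unfolding good_def by blast
  have v0V: "v0 \<in> V" using g e0 v0 unfolding good_def by blast
  note t0 = tight[OF g e0(1) e0(2) B[rule_format, OF e0(1)] v0]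
  have allw: "sec2_degree V E w = card V - 1 \<and> (\<forall>f\<in>E. w \<in> f \<longrightarrow> card f = r)" if w: "w \<in> V" for w
  proof (cases "w = v0")
    case True thus ?thesis using t0 unfolding r_def by simp
  next
    case False
    then obtain f where f: "f \<in> E" "v0 \<in> f" "w \<in> f" using cover[OF g v0V _ w] t0 by blast
    have cf: "card f = r" using t0 f unfolding r_def by simp
    have mf: "\<forall>h\<in>E. card f \<le> card h" using e0(2) cf unfolding r_def by simp
    note tf = tight[OF g f(1) mf B[rule_format, OF f(1)] f(3)]
    thus ?thesis using cf by simp
  qed
  have "\<forall>f\<in>E. card f = r"
  proof
    fix f assume f: "f \<in> E"
    then obtain w where "w \<in> f" using g unfolding good_def by blast
    moreover hence "w \<in> V" using g f unfolding good_def by blast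
    ultimately show "card f = r" using allw f by blast
  qed
  thus ?thesis using allw t0 unfolding r_def by blast
qed

lemma through:
  assumes g: "good V E" and cov: "\<forall>w\<in>V. \<forall>u\<in>V. u \<noteq> w \<longrightarrow> (\<exists>f\<in>E. w \<in> f \<and> u \<in> f)"
    and cr: "\<forall>f\<in>E. card f = r" and n: "card V = r^2" and r2: "2 \<le> r" and w: "w \<in> V"
  shows "card {f\<in>E. w \<in> f} = r + 1"
proof -
  define T where "T = {f\<in>E. w \<in> f}"
  have finV: "finite V" using g unfolding good_def by simp
  have finT: "finite T" using good_finE[OF g] unfolding T_def by simp
  have eq: "V - {w} = (\<Union>f\<in>T. f - {w})"
  proof
    show "V - {w} \<subseteq> (\<Union>f\<in>T. f - {w})"
    proof
      fix u assume u: "u \<in> V - {w}"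
      then obtain f where "f \<in> E" "w \<in> f" "u \<in> f" using cov w by blast
      thus "u \<in> (\<Union>f\<in>T. f - {w})" using u unfolding T_def by blast
    qed
    show "(\<Union>f\<in>T. f - {w}) \<subseteq> V - {w}" using g unfolding T_def good_def by blast
  qed
  have "card (\<Union>f\<in>T. f - {w}) = (\<Sum>f\<in>T. card (f - {w}))"
  proof (rule card_UN_disjoint[OF finT])
    show "\<forall>i\<in>T. finite (i - {w})" using good_fin_edge[OF g] unfolding T_def by blast
    show "\<forall>i\<in>T. \<forall>j\<in>T. i \<noteq> j \<longrightarrow> (i - {w}) \<inter> (j - {w}) = {}"
      using good_lin[OF g] unfolding T_def by blast
  qed
  also have "\<dots> = (\<Sum>f\<in>T. r - 1)"
    using good_fin_edge[OF g] cr unfolding T_def by (intro sum.cong) auto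
  finally have "card (V - {w}) = card T * (r - 1)" using eq by simp
  hence "r^2 - 1 = card T * (r - 1)" using w finV n by simp
  moreover have "r^2 - 1 = (r + 1) * (r - 1)" using r2
    by (simp add: power2_eq_square algebra_simps)
  ultimately have "card T * (r - 1) = (r + 1) * (r - 1)" by simp
  moreover have "r - 1 > 0" using r2 by simp
  ultimately have "card T = r + 1" by (metis mult_right_cancel neq0_conv)
  thus ?thesis unfolding T_def by simp
qed

lemma meet:
  assumes g: "good V E" and cov: "\<forall>w\<in>V. \<forall>u\<in>V. u \<noteq> w \<longrightarrow> (\<exists>f\<in>E. w \<in> f \<and> u \<in> f)"
    and cr: "\<forall>f\<in>E. card f = r" and L: "L \<in> E" and w: "w \<in> V" "w \<notin> L"
  shows "card {f\<in>E. w \<in> f \<and> f \<inter> L \<noteq> {}} = r"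
proof -
  define M where "M = {f\<in>E. w \<in> f \<and> f \<inter> L \<noteq> {}}"
  have one: "\<exists>x. f \<inter> L = {x}" if f: "f \<in> M" for f
  proof -
    obtain x where "x \<in> f \<inter> L" using f unfolding M_def by blast
    moreover have "f \<noteq> L" using f w unfolding M_def by blast
    ultimately have "f \<inter> L = {x}" using good_lin[OF g, of f L x] f L unfolding M_def by blast
    thus ?thesis by blast
  qed
  have "bij_betw (\<lambda>f. the_elem (f \<inter> L)) M L"
  proof (rule bij_betw_imageI)
    show "inj_on (\<lambda>f. the_elem (f \<inter> L)) M"
    proof (rule inj_onI)
      fix f h assume f: "f \<in> M" and h: "h \<in> M" and eqx: "the_elem (f \<inter> L) = the_elem (h \<inter> L)"
      obtain x where x: "f \<inter> L = {x}" using one f by blast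
      obtain y where y: "h \<inter> L = {y}" using one h by blast
      have "x = y" using eqx x y by simp
      show "f = h"
      proof (rule ccontr)
        assume "f \<noteq> h"
        hence "f \<inter> h = {w}" using good_lin[OF g, of f h w] f h unfolding M_def by blast
        moreover have "x \<in> f \<inter> h" using x y \<open>x = y\<close> by blast
        moreover have "x \<noteq> w" using x w by blast
        ultimately show False by blast
      qed
    qed
    show "(\<lambda>f. the_elem (f \<inter> L)) ` M = L"
    proof
      show "(\<lambda>f. the_elem (f \<inter> L)) ` M \<subseteq> L"
        using one by fastforce
      show "L \<subseteq> (\<lambda>f. the_elem (f \<inter> L)) ` M"
      proof
        fix x assume x: "x \<in> L"
        have xV: "x \<in> V" using g L x unfolding good_def by blast
        have "x \<noteq> w" using x w by blast
        then obtain f where f: "f \<in> E" "w \<in> f" "x \<in> f" using cov w(1) xV by blast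
        hence fM: "f \<in> M" using x unfolding M_def by blast
        then obtain y where "f \<inter> L = {y}" using one by blast
        moreover have "x \<in> f \<inter> L" using f x by blast
        ultimately have "f \<inter> L = {x}" by (metis singletonD)
        hence "x = the_elem (f \<inter> L)" by simp
        thus "x \<in> (\<lambda>f. the_elem (f \<inter> L)) ` M" using fM by (rule image_eqI)
      qed
    qed
  qed
  hence "card M = card L" by (rule bij_betw_same_card)
  thus ?thesis using cr L unfolding M_def by simp
qed


lemma para:
  assumes g: "good V E" and cov: "\<forall>w\<in>V. \<forall>u\<in>V. u \<noteq> w \<longrightarrow> (\<exists>f\<in>E. w \<in> f \<and> u \<in> f)"
    and cr: "\<forall>f\<in>E. card f = r" and n: "card V = r^2" and r2: "2 \<le> r"
    and L: "L \<in> E" and w: "w \<in> V" "w \<notin> L"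
  shows "card {f\<in>E. w \<in> f \<and> f \<inter> L = {}} = 1"
proof -
  have finE: "finite E" using good_finE[OF g] .
  have "{f\<in>E. w \<in> f} = {f\<in>E. w \<in> f \<and> f \<inter> L \<noteq> {}} \<union> {f\<in>E. w \<in> f \<and> f \<inter> L = {}}" by blast
  hence "card {f\<in>E. w \<in> f} = card {f\<in>E. w \<in> f \<and> f \<inter> L \<noteq> {}} + card {f\<in>E. w \<in> f \<and> f \<inter> L = {}}"
    using finE by (simp add: card_Un_disjoint disjoint_iff)
  thus ?thesis using through[OF g cov cr n r2 w(1)] meet[OF g cov cr L w] by simp
qed

lemma affine:
  assumes g: "good V E" and cov: "\<forall>w\<in>V. \<forall>u\<in>V. u \<noteq> w \<longrightarrow> (\<exists>f\<in>E. w \<in> f \<and> u \<in> f)"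
    and cr: "\<forall>f\<in>E. card f = r" and n: "card V = r^2" and r2: "2 \<le> r" and v0: "v0 \<in> V"
  shows "\<exists>c. proper_edge_coloring E (r + 1) c"
proof -
  define P where "P = {g\<in>E. v0 \<in> g}"
  have finE: "finite E" using good_finE[OF g] .
  have cP: "card P = r + 1" using through[OF g cov cr n r2 v0] unfolding P_def .
  have finP: "finite P" using finE unfolding P_def by simp
  obtain h where h: "bij_betw h P {0..<r+1}"
    using finite_same_card_bij[OF finP, of "{0..<r+1}"] cP by auto
  define par where "par f = (SOME g. g \<in> P \<and> (g = f \<or> g \<inter> f = {}))" for f
  have par: "par f \<in> P \<and> (par f = f \<or> par f \<inter> f = {})" if f: "f \<in> E" for f
  proof -
    have "\<exists>g. g \<in> P \<and> (g = f \<or> g \<inter> f = {})"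
    proof (cases "v0 \<in> f")
      case True thus ?thesis using f unfolding P_def by blast
    next
      case False
      have "card {g\<in>E. v0 \<in> g \<and> g \<inter> f = {}} = 1" using para[OF g cov cr n r2 f v0 False] .
      then obtain g where "g \<in> {g\<in>E. v0 \<in> g \<and> g \<inter> f = {}}" by (metis card_1_singletonE singletonI)
      thus ?thesis unfolding P_def by blast
    qed
    thus ?thesis unfolding par_def by (rule someI_ex)
  qed
  define c where "c f = h (par f)" for f
  have "proper_edge_coloring E (r + 1) c"
    unfolding proper_edge_coloring_def
  proof (intro conjI ballI impI)
    fix f assume f: "f \<in> E"
    show "c f < r + 1" using par[OF f] h unfolding c_def bij_betw_def by auto
  next
    fix f f' assume f: "f \<in> E" and f': "f' \<in> E" and ff: "f \<noteq> f' \<and> f \<inter> f' \<noteq> {}"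
    show "c f \<noteq> c f'"
    proof
      assume "c f = c f'"
      hence eqp: "par f = par f'" using par[OF f] par[OF f'] h unfolding c_def bij_betw_def inj_on_def by blast
      define L where "L = par f"
      obtain w where w: "w \<in> f" "w \<in> f'" using ff by blast
      have L1: "L = f \<or> L \<inter> f = {}" and L2: "L = f' \<or> L \<inter> f' = {}" and LE: "L \<in> E"
        using par[OF f] par[OF f'] eqp unfolding L_def P_def by auto
      show False
      proof (cases "L = f \<or> L = f'")
        case True thus False using L1 L2 ff w by blast
      next
        case False
        hence d: "L \<inter> f = {}" "L \<inter> f' = {}" using L1 L2 by auto
        have wV: "w \<in> V" using g f w unfolding good_def by blast
        have wL: "w \<notin> L" using d w by blast
        have "card {g\<in>E. w \<in> g \<and> g \<inter> L = {}} = 1" using para[OF g cov cr n r2 LE wV wL] .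
        moreover have "f \<in> {g\<in>E. w \<in> g \<and> g \<inter> L = {}}" "f' \<in> {g\<in>E. w \<in> g \<and> g \<inter> L = {}}"
          using f f' w d by auto
        ultimately show False using ff by (metis card_1_singletonE singletonD)
      qed
    qed
  qed
  thus ?thesis by blast
qed


lemma coloring_mono: "proper_edge_coloring E k c \<Longrightarrow> k \<le> k' \<Longrightarrow> proper_edge_coloring E k' c"
  unfolding proper_edge_coloring_def by fastforce

lemma mainlem: "good V E \<Longrightarrow> \<exists>c. proper_edge_coloring E (sec2_max_degree V E + 1) c"
proof (induction "card E" arbitrary: E rule: less_induct)
  case less
  note g = less.prems
  have finV: "finite V" using g unfolding good_def by simp
  have finE: "finite E" using good_finE[OF g] .
  define \<Delta> where "\<Delta> = sec2_max_degree V E"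
  show ?case
  proof (cases "E = {}")
    case True
    thus ?thesis unfolding proper_edge_coloring_def by auto
  next
    case ne: False
    show ?thesis
    proof (cases "\<exists>e\<in>E. card (nbs E e) \<le> \<Delta>")
      case True
      then obtain e where e: "e \<in> E" "card (nbs E e) \<le> \<Delta>" by blast
      have "card (E - {e}) < card E" by (rule card_Diff1_less[OF finE e(1)])
      then obtain c where c: "proper_edge_coloring (E - {e}) (sec2_max_degree V (E - {e}) + 1) c"
        using less.hyps[of "E - {e}"] good_sub[OF g, of "E - {e}"] by blast
      have "sec2_max_degree V (E - {e}) \<le> \<Delta>" using max_mono[OF finV, of "E - {e}" E] unfolding \<Delta>_def by blast
      hence c': "proper_edge_coloring (E - {e}) (\<Delta> + 1) c" using coloring_mono[OF c] by simp
      define S where "S = c ` nbs E e"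
      have "card S \<le> card (nbs E e)" unfolding S_def using finE by (intro card_image_le) (simp add: nbs_def)
      hence "card S < card {0..<\<Delta>+1}" using e by simp
      moreover have "finite S" using finE unfolding S_def nbs_def by simp
      ultimately have "\<not> {0..<\<Delta>+1} \<subseteq> S" using card_mono not_le by blast
      then obtain col where col: "col < \<Delta> + 1" "col \<notin> S" by (meson atLeastLessThan_iff subsetI zero_le)
      define c2 where "c2 = c(e := col)"
      have "proper_edge_coloring E (\<Delta> + 1) c2"
        unfolding proper_edge_coloring_def
      proof (intro conjI ballI impI)
        fix f assume f: "f \<in> E"
        show "c2 f < \<Delta> + 1"
        proof (cases "f = e")
          case True thus ?thesis using col unfolding c2_def by simp
        next
          case False thus ?thesis using c' f unfolding c2_def proper_edge_coloring_def by auto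
        qed
      next
        fix f f' assume f: "f \<in> E" and f': "f' \<in> E" and ff: "f \<noteq> f' \<and> f \<inter> f' \<noteq> {}"
        show "c2 f \<noteq> c2 f'"
        proof (cases "f = e")
          case True
          hence "f' \<in> nbs E e" using f' ff unfolding nbs_def by blast
          hence "c f' \<in> S" unfolding S_def by blast
          thus ?thesis using True ff col unfolding c2_def by auto
        next
          case fe: False
          show ?thesis
          proof (cases "f' = e")
            case True
            hence "f \<in> nbs E e" using f ff unfolding nbs_def by blast
            hence "c f \<in> S" unfolding S_def by blast
            thus ?thesis using True ff col unfolding c2_def by auto
          next
            case False
            thus ?thesis using fe f f' ff c' unfolding c2_def proper_edge_coloring_def by auto
          qed
        qed
      qed
      thus ?thesis unfolding \<Delta>_def by blast
    next
      case False
      hence B: "\<forall>e\<in>E. sec2_max_degree V E < card (nbs E e)" unfolding \<Delta>_def by auto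
      obtain r where r: "\<forall>w\<in>V. sec2_degree V E w = card V - 1" "\<forall>f\<in>E. card f = r" "card V = r^2" "2 \<le> r"
        using caseB[OF g ne B] by blast
      have cov: "\<forall>w\<in>V. \<forall>u\<in>V. u \<noteq> w \<longrightarrow> (\<exists>f\<in>E. w \<in> f \<and> u \<in> f)"
        using cover[OF g] r(1) by blast
      obtain e where e: "e \<in> E" using ne by blast
      then obtain v0 where v0: "v0 \<in> e" using g unfolding good_def by blast
      have v0V: "v0 \<in> V" using g e v0 unfolding good_def by blast
      obtain c where c: "proper_edge_coloring E (r + 1) c" using affine[OF g cov r(2) r(3) r(4) v0V] by blast
      have "r^2 - 1 \<le> \<Delta>" using deg_le_max[OF finV v0V, of E] r(1) r(3) v0V unfolding \<Delta>_def by simp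
      moreover have "r \<le> r^2 - 1"
      proof -
        have "2 * r \<le> r * r" using mult_le_mono1[OF r(4), of r] .
        thus ?thesis using r(4) unfolding power2_eq_square by linarith
      qed
      ultimately have "r + 1 \<le> \<Delta> + 1" by simp
      thus ?thesis using coloring_mono[OF c] unfolding \<Delta>_def by blast
    qed
  qed
qed


theorem theorem1p6:
  fixes V :: "'a set" and E :: "'a set set"
  assumes "hypergraph V E"
    and "linear_hg E"
    and "antirank E \<ge> ereal (sqrt (real (card V)))"
  shows "chromatic_index E \<le> sec2_max_degree V E + 1"
proof -
  have sq: "card V \<le> card e ^ 2" if e: "e \<in> E" for e
  proof -
    have ne: "E \<noteq> {}" using e by blast
    have finE: "finite E"
      using assms(1) unfolding hypergraph_def by (meson Pow_iff finite_Pow_iff rev_finite_subset subsetI)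
    have "sqrt (real (card V)) \<le> real (Min (card ` E))"
      using assms(3) ne unfolding antirank_def by simp
    also have "\<dots> \<le> real (card e)" using finE e by simp
    finally have "real (card V) \<le> (real (card e))^2" by (rule sqrt_le_D)
    thus ?thesis by (metis of_nat_le_iff of_nat_power)
  qed
  have "good V E" using assms(1,2) sq unfolding good_def hypergraph_def by blast
  then obtain c where "proper_edge_coloring E (sec2_max_degree V E + 1) c" using mainlem by blast
  thus ?thesis unfolding chromatic_index_def by (rule Least_le[where P = "\<lambda>k. \<exists>c. proper_edge_coloring E k c", OF exI])
qed

end
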